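(* Let $0<q<1$. Then \[ \sum_{n=0}^{\infty}\frac{(1-q^{4n+3})(1-q^{2n+1})(1/2|q^{2})_{n}^{2}(1/3|q^{2})_{n}(2/3|q^{2})_{n}}{(1-q^{2})(1-q^{2n+2})([n]_{q^{2}}!)^{2}(7/6|q^{2})_{n+1}(5/6|q^{2})_{n+1}}\,q^{2n} =\frac{[1/6]_{q^{2}}\,(q^{4/3},q^{2/3};q^{2})_{\infty}\,q^{1/4}}{[1/3]_{q^{2}}[2/3]_{q^{2}}[1/2]_{q^{2}}\,(q^{1/3},q^{5/3};q^{2})_{\infty}\,\pi_{q}}. \]
   Context: Let $0<q<1$ and write $q^{x}=e^{x\log q}$. $(z;q)_\infty=\prod_{k\ge0}(1-zq^k)$, $(z_1,z_2;q)_\infty=(z_1;q)_\infty(z_2;q)_\infty$. $[z]_{q^2}=\frac{1-q^{2z}}{1-q^2}$; for integers $n\ge0$, $(x|q^2)_n=\prod_{k=0}^{n-1}[x+k]_{q^2}$ (empty product $=1$); $[0]_{q^2}!=1$, $[n]_{q^2}!=\prod_{k=1}^n[k]_{q^2}$. $\pi_q=(1-q^2)q^{1/4}\frac{(q^2;q^2)_\infty^2}{(q;q^2)_\infty^2}$. *)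

theory Defs
  imports "HOL-Analysis.Analysis"
begin

definition qpoch_inf :: "real \<Rightarrow> real \<Rightarrow> real" where
  "qpoch_inf z q = (\<Prod>k. (1 - z * q ^ k))"

definition qnum :: "real \<Rightarrow> real \<Rightarrow> real" where
  "qnum Q z = (1 - Q powr z) / (1 - Q)"

definition qshift :: "real \<Rightarrow> real \<Rightarrow> nat \<Rightarrow> real" where
  "qshift Q x n = (\<Prod>k<n. qnum Q (x + real k))"

definition qfact :: "real \<Rightarrow> nat \<Rightarrow> real" where
  "qfact Q n = (\<Prod>k\<in>{1..n}. qnum Q (real k))"

definition qpi :: "real \<Rightarrow> real" where
  "qpi q = (1 - q\<^sup>2) * q powr (1/4) * (qpoch_inf (q\<^sup>2) (q\<^sup>2))\<^sup>2 / (qpoch_inf q (q\<^sup>2))\<^sup>2"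

end

theory Submission
  imports Defs
begin


lemma qp_conv:
  fixes z Q :: real assumes "0 \<le> Q" "Q < 1"
  shows "convergent_prod (\<lambda>k. 1 - z * Q ^ k)"
proof -
  have "summable (\<lambda>k. norm ((1 - z * Q ^ k) - 1))"
    using assms by (simp add: abs_mult power_abs summable_mult summable_geometric)
  then show ?thesis
    by (intro abs_convergent_prod_imp_convergent_prod summable_imp_abs_convergent_prod)
qed

lemma qp_lim:
  fixes z Q :: real assumes "0 \<le> Q" "Q < 1"
  shows "(\<lambda>n. \<Prod>k<n. 1 - z * Q ^ k) \<longlonglongrightarrow> qpoch_inf z Q"
proof -
  have "(\<lambda>n. \<Prod>k\<le>n. 1 - z * Q ^ k) \<longlonglongrightarrow> qpoch_inf z Q"
    unfolding qpoch_inf_def using convergent_prod_LIMSEQ[OF qp_conv[OF assms]] .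
  then have "(\<lambda>n. \<Prod>k<Suc n. 1 - z * Q ^ k) \<longlonglongrightarrow> qpoch_inf z Q"
    by (simp add: lessThan_Suc_atMost)
  then show ?thesis by (rule LIMSEQ_imp_Suc)
qed

lemma qp_shift:
  fixes z Q :: real assumes "0 \<le> Q" "Q < 1" "z \<noteq> 1"
  shows "qpoch_inf z Q = (1 - z) * qpoch_inf (z * Q) Q"
proof -
  have "(\<Prod>n. (\<lambda>k. 1 - z * Q ^ k) (Suc n)) = qpoch_inf z Q / (1 - z)"
    using prodinf_split_head[OF qp_conv[OF assms(1,2), of z]] assms unfolding qpoch_inf_def by simp
  moreover have "(\<lambda>n. (\<lambda>k. 1 - z * Q ^ k) (Suc n)) = (\<lambda>n. 1 - (z*Q) * Q ^ n)"
    by (auto simp: mult.assoc)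
  ultimately show ?thesis using assms unfolding qpoch_inf_def by simp
qed

lemma qp_nz:
  fixes z Q :: real assumes "0 \<le> Q" "Q < 1" "0 \<le> z" "z < 1"
  shows "qpoch_inf z Q \<noteq> 0"
proof -
  have "z * Q ^ k < 1" for k
  proof -
    have "Q ^ k \<le> 1" using assms by (simp add: power_le_one)
    then have "z * Q ^ k \<le> z" using assms by (simp add: mult_left_le)
    then show ?thesis using assms by simp
  qed
  then show ?thesis unfolding qpoch_inf_def
    by (intro prodinf_nonzero qp_conv assms) (auto simp: less_le)
qed

lemma comb:
  fixes X E Y R S W :: real
  assumes "E \<noteq> 0" "Y \<noteq> 0" "R \<noteq> 0" "S - R = W * E"
  shows "X / (E * Y) + W * X / (Y * R) = X * S / (E * (Y * R))"
proof -
  have "S = R + W * E" using assms by simp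
  then show ?thesis using assms by (simp add: field_simps)
qed

lemma telescope:
  fixes b c d p :: real
  defines "N \<equiv> \<lambda>n. \<Prod>k<n. (1 - b*c*d*p^k) * (1 - b*p^k) * (1 - c*p^k) * (1 - d*p^k)"
  defines "D \<equiv> \<lambda>n. \<Prod>k<n. (1 - p^(k+1)) * (1 - c*d*p^(k+1)) * (1 - b*d*p^(k+1)) * (1 - b*c*p^(k+1))"
  assumes D: "\<And>n. D n \<noteq> 0" and bcd: "b \<noteq> 1" "c \<noteq> 1" "d \<noteq> 1"
  shows "(\<Sum>k<Suc n. (1 - b*c*d*p^(2*k)) * p^k * N k / D k) = N (Suc n) / ((1-b)*(1-c)*(1-d) * D n)"
proof (induction n)
  case 0
  then show ?case using bcd by (simp add: N_def D_def)
next
  case (Suc n)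
  define z where "z = p^(Suc n)"
  have key: "(1 - b*c*d*z)*(1 - b*z)*(1 - c*z)*(1 - d*z) - (1 - z)*(1 - c*d*z)*(1 - b*d*z)*(1 - b*c*z)
      = (1 - b*c*d*z^2) * z * ((1-b)*(1-c)*(1-d))"
    by algebra
  have N2: "N (Suc (Suc n)) = N (Suc n) * ((1 - b*c*d*z)*(1 - b*z)*(1 - c*z)*(1 - d*z))"
    by (simp add: N_def z_def)
  have D1: "D (Suc n) = D n * ((1 - z)*(1 - c*d*z)*(1 - b*d*z)*(1 - b*c*z))"
    by (simp add: D_def z_def)
  have z2: "p^(2*Suc n) = z^2" unfolding z_def by (metis power_mult mult.commute)
  have E: "(1-b)*(1-c)*(1-d) \<noteq> 0" using bcd by simp
  have Dn: "D n \<noteq> 0" "D (Suc n) \<noteq> 0" using D by auto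
  have "(\<Sum>k<Suc (Suc n). (1 - b*c*d*p^(2*k)) * p^k * N k / D k)
       = (\<Sum>k<Suc n. (1 - b*c*d*p^(2*k)) * p^k * N k / D k) + (1 - b*c*d*p^(2*Suc n)) * p^Suc n * N (Suc n) / D (Suc n)"
    by (rule sum.lessThan_Suc)
  also have "\<dots> = N (Suc n) / ((1-b)*(1-c)*(1-d) * D n) + (1 - b*c*d*z^2) * z * N (Suc n) / D (Suc n)"
    by (simp only: Suc.IH z2 z_def[symmetric])
  also have "\<dots> = N (Suc (Suc n)) / ((1-b)*(1-c)*(1-d) * D (Suc n))"
    unfolding N2 D1
  proof (rule comb[OF E Dn(1) _ key])
    show "(1 - z)*(1 - c*d*z)*(1 - b*d*z)*(1 - b*c*z) \<noteq> 0" using Dn(2) D1 by auto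
  qed
  finally show ?case .
qed


lemma pw:
  fixes x r :: real assumes "0 < x" "real k * r = real m"
  shows "(x ^ k) powr r = x ^ m"
proof -
  have "(x ^ k) powr r = (x powr real k) powr r" using assms by (simp add: powr_realpow)
  also have "\<dots> = x powr (real k * r)" by (simp add: powr_powr)
  also have "\<dots> = x ^ m" using assms by (simp add: powr_realpow)
  finally show ?thesis .
qed

definition P :: "real \<Rightarrow> nat \<Rightarrow> nat \<Rightarrow> real" where
  "P x m n = (\<Prod>k<n. 1 - x^m * (x^6)^k)"

lemma P_Suc: "P x m (Suc n) = P x m n * (1 - x^(6*n+m))"
proof -
  have "x^(6*n+m) = x^m * (x^6)^n" by (simp add: power_add power_mult)
  then show ?thesis by (simp add: P_def)
qed

lemma P_shift: "P x m (Suc n) = (1 - x^m) * P x (m+6) n"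
proof -
  have "P x m (Suc n) = (1 - x^m) * (\<Prod>k<n. 1 - x^m * (x^6)^(Suc k))"
    unfolding P_def prod.lessThan_Suc_shift by simp
  also have "(\<Prod>k<n. 1 - x^m * (x^6)^(Suc k)) = P x (m+6) n"
    unfolding P_def by (intro prod.cong refl) (metis power_add power_Suc mult.assoc)
  finally show ?thesis .
qed

lemma P_pos: assumes "0 < x" "x < 1" "m > 0" shows "P x m n > 0"
  unfolding P_def
proof (rule prod_pos)
  fix k assume "k \<in> {..<n}"
  have "x^m < 1" using assms by (simp add: power_less_one_iff)
  moreover have "(x^6)^k \<le> 1" using assms by (simp add: power_le_one)
  moreover have "x^m > 0" using assms by simp
  ultimately have "x^m * (x^6)^k \<le> x^m" by (simp add: mult_left_le)
  with \<open>x^m < 1\<close> have "x^m * (x^6)^k < 1" by linarith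
  then show "0 < 1 - x ^ m * (x ^ 6) ^ k" by simp
qed

lemma qnum_x: assumes "0 < x" "6 * r = real m"
  shows "qnum (x^6) r = (1 - x^m) / (1 - x^6)"
  unfolding qnum_def using pw[of x 6 r m] assms by simp

lemma qshift_x: assumes "0 < x" "6 * r = real m"
  shows "qshift (x^6) r n = P x m n / (1 - x^6)^n"
proof (induction n)
  case 0 then show ?case by (simp add: qshift_def P_def)
next
  case (Suc n)
  have "qshift (x^6) r (Suc n) = qshift (x^6) r n * qnum (x^6) (r + real n)"
    by (simp add: qshift_def)
  also have "qnum (x^6) (r + real n) = (1 - x^(6*n+m)) / (1 - x^6)"
    by (rule qnum_x) (use assms in auto)
  finally show ?case using Suc by (simp add: P_Suc)
qed

lemma qfact_x: assumes "0 < x"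
  shows "qfact (x^6) n = P x 6 n / (1 - x^6)^n"
proof (induction n)
  case 0 then show ?case by (simp add: qfact_def P_def)
next
  case (Suc n)
  have "qfact (x^6) (Suc n) = qfact (x^6) n * qnum (x^6) (real (Suc n))"
    by (simp add: qfact_def atLeastAtMostSuc_conv mult.commute)
  also have "qnum (x^6) (real (Suc n)) = (1 - x^(6*n+6)) / (1 - x^6)"
    by (rule qnum_x) (use assms in auto)
  finally show ?case using Suc by (simp add: P_Suc)
qed



definition Nf :: "real \<Rightarrow> real \<Rightarrow> real \<Rightarrow> real \<Rightarrow> nat \<Rightarrow> real" where
  "Nf b c d p n = (\<Prod>k<n. (1 - b*c*d*p^k) * (1 - b*p^k) * (1 - c*p^k) * (1 - d*p^k))"
definition Df :: "real \<Rightarrow> real \<Rightarrow> real \<Rightarrow> real \<Rightarrow> nat \<Rightarrow> real" where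
  "Df b c d p n = (\<Prod>k<n. (1 - p^(k+1)) * (1 - c*d*p^(k+1)) * (1 - b*d*p^(k+1)) * (1 - b*c*p^(k+1)))"

lemma tele2:
  assumes "\<And>n. Df b c d p n \<noteq> 0" "b \<noteq> 1" "c \<noteq> 1" "d \<noteq> 1"
  shows "(\<Sum>k<Suc n. (1 - b*c*d*p^(2*k)) * p^k * Nf b c d p k / Df b c d p k)
     = Nf b c d p (Suc n) / ((1-b)*(1-c)*(1-d) * Df b c d p n)"
proof -
  have D: "\<And>n. (\<Prod>k<n. (1 - p^(k+1)) * (1 - c*d*p^(k+1)) * (1 - b*d*p^(k+1)) * (1 - b*c*p^(k+1))) \<noteq> 0"
    using assms(1) unfolding Df_def .
  show ?thesis unfolding Nf_def Df_def by (rule telescope[OF D assms(2-4)])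
qed

lemma Nf_x: "Nf (x^3) (x^2) (x^4) (x^6) n = P x 9 n * P x 3 n * P x 2 n * P x 4 n"
proof -
  have "x^3*x^2*x^4 = x^9" by (simp add: power_add[symmetric])
  then show ?thesis unfolding Nf_def P_def prod.distrib by (simp add: mult.assoc)
qed

lemma Df_x: "Df (x^3) (x^2) (x^4) (x^6) n = P x 6 n * P x 12 n * P x 13 n * P x 11 n"
proof -
  have "(x^6)^(k+1) = x^6 * (x^6)^k" for k by simp
  moreover have "x^2*x^4*(x^6 * y) = x^12 * y" for y by (simp add: power_add[symmetric] mult.assoc[symmetric])
  moreover have "x^3*x^4*(x^6 * y) = x^13 * y" for y by (simp add: power_add[symmetric] mult.assoc[symmetric])
  moreover have "x^3*x^2*(x^6 * y) = x^11 * y" for y by (simp add: power_add[symmetric] mult.assoc[symmetric])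
  ultimately show ?thesis unfolding Df_def P_def prod.distrib by (simp add: mult.assoc)
qed

lemma alg:
  fixes A1 B P3 P2 P4 P6 P9 P12 P13 P11 P7 P5 c u E6 Z b3 ra rb :: real
  assumes "c \<noteq> 0" "u \<noteq> 0" "P3 \<noteq> 0" "P6 \<noteq> 0" "P12 \<noteq> 0" "P13 \<noteq> 0" "P11 \<noteq> 0" "P2 \<noteq> 0" "P4 \<noteq> 0"
    "ra \<noteq> 0" "rb \<noteq> 0"
    "B * P3 = b3 * P9" "E6 * P6 = c * P12" "P7 = ra * P13" "P5 = rb * P11"
  shows "A1*B*(P3/u)^2*(P2/u)*(P4/u)/(c*E6*(P6/u)^2*(P7/(u*c))*(P5/(u*c)))*Z
       = b3/((ra * rb))*(A1*Z*(P9*P3*P2*P4)/(P6*P12*P13*P11))"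
proof -
  have B: "B = b3 * P9 / P3" and E: "E6 = c * P12 / P6" using assms by (auto simp: field_simps)
  show ?thesis unfolding B E using assms(1-11) assms(14,15) by (simp add: field_simps power2_eq_square)
qed



lemma Qs: assumes "0 < x" "x < 1" "0 < m"
  shows "qpoch_inf (x^m) (x^6) = (1 - x^m) * qpoch_inf (x^(m+6)) (x^6)"
proof -
  have "x^m < 1" using assms by (simp add: power_less_one_iff)
  then have "x^m \<noteq> 1" by simp
  moreover have "x^6 < 1" using assms by (simp add: power_less_one_iff)
  ultimately show ?thesis using qp_shift[of "x^6" "x^m"] assms by (simp add: power_add)
qed

lemma Qnz: assumes "0 < x" "x < 1" "0 < m" shows "qpoch_inf (x^m) (x^6) \<noteq> 0"
  by (rule qp_nz) (use assms in \<open>auto simp: power_less_one_iff\<close>)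

lemma Plim: assumes "0 < x" "x < 1" shows "(\<lambda>n. P x m n) \<longlonglongrightarrow> qpoch_inf (x^m) (x^6)"
  unfolding P_def by (rule qp_lim) (use assms in \<open>auto simp: power_less_one_iff\<close>)

lemma PlimS: assumes "0 < x" "x < 1" shows "(\<lambda>n. P x m (Suc n)) \<longlonglongrightarrow> qpoch_inf (x^m) (x^6)"
  using LIMSEQ_Suc[OF Plim[OF assms]] .



lemma pm: "k * a = b \<Longrightarrow> ((x::real)^k)^a = x^b" by (metis power_mult)

lemma term_eq:
  fixes x :: real and n :: nat assumes x: "0 < x" "x < 1"
  shows "(1 - (x^3) ^ (4*n+3)) * (1 - (x^3) ^ (2*n+1)) * (qshift (x^6) (1/2) n)\<^sup>2
              * qshift (x^6) (1/3) n * qshift (x^6) (2/3) n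
            / ((1 - x^6) * (1 - (x^3) ^ (2*n+2)) * (qfact (x^6) n)\<^sup>2
              * qshift (x^6) (7/6) (n+1) * qshift (x^6) (5/6) (n+1)) * (x^3) ^ (2*n)
       = (1 - x^3) / ((1 - x^7) * (1 - x^5)) *
         ((1 - x^3*x^2*x^4*(x^6)^(2*n)) * (x^6)^n * Nf (x^3) (x^2) (x^4) (x^6) n / Df (x^3) (x^2) (x^4) (x^6) n)"
proof -
  have q1: "qshift (x^6) (1/2) n = P x 3 n / (1 - x^6)^n" by (rule qshift_x) (use x in auto)
  have q2: "qshift (x^6) (1/3) n = P x 2 n / (1 - x^6)^n" by (rule qshift_x) (use x in auto)
  have q3: "qshift (x^6) (2/3) n = P x 4 n / (1 - x^6)^n" by (rule qshift_x) (use x in auto)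
  have q4: "qshift (x^6) (7/6) (n+1) = P x 7 (n+1) / ((1 - x^6)^n * (1 - x^6))"
    using qshift_x[of x "7/6" 7 "n+1"] x by simp
  have q5: "qshift (x^6) (5/6) (n+1) = P x 5 (n+1) / ((1 - x^6)^n * (1 - x^6))"
    using qshift_x[of x "5/6" 5 "n+1"] x by simp
  have q6: "qfact (x^6) n = P x 6 n / (1 - x^6)^n" by (rule qfact_x) (use x in auto)
  have pos: "\<And>m. 0 < m \<Longrightarrow> P x m n \<noteq> 0" using P_pos x by (metis less_irrefl)
  have lt: "1 - x^m \<noteq> 0" if "0 < m" for m
  proof -
    have "x^m < 1" using x that by (simp add: power_less_one_iff)
    then show ?thesis by simp
  qed
  have e1: "(x^3) ^ (2*n+1) = x^(6*n+3)" by (rule pm) simp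
  have e2: "(x^3) ^ (2*n+2) = x^(6*n+6)" by (rule pm) simp
  have e3: "(x^3) ^ (4*n+3) = x^3*x^2*x^4*(x^6)^(2*n)"
  proof -
    have "x^3*x^2*x^4*(x^6)^(2*n) = x^(3+2+4+6*(2*n))" by (simp only: power_add power_mult)
    then show ?thesis using pm[of 3 "4*n+3" "3+2+4+6*(2*n)" x] by simp
  qed
  have e4: "(x^3) ^ (2*n) = (x^6)^n" using pm[of 3 "2*n" "6*n" x] pm[of 6 n "6*n" x] by simp
  have B: "(1 - (x^3) ^ (2*n+1)) * P x 3 n = (1 - x^3) * P x 9 n"
    using P_Suc[of x 3 n] P_shift[of x 3 n] unfolding e1 by (simp add: mult.commute)
  have E6: "(1 - (x^3) ^ (2*n+2)) * P x 6 n = (1 - x^6) * P x 12 n"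
    using P_Suc[of x 6 n] P_shift[of x 6 n] unfolding e2 by (simp add: mult.commute)
  have P7: "P x 7 (n+1) = (1 - x^7) * P x 13 n" using P_shift[of x 7 n] by simp
  have P5: "P x 5 (n+1) = (1 - x^5) * P x 11 n" using P_shift[of x 5 n] by simp
  have cn: "(1 - x^6)^n \<noteq> 0" using lt[of 6] by simp
  show ?thesis
    unfolding q1 q2 q3 q4 q5 q6 Nf_x Df_x
    apply (subst alg[OF lt[of 6] cn pos pos pos pos pos pos pos lt lt B E6 P7 P5])
    using e3 e4 by (simp_all add: mult.assoc)
qed



lemma sums_x:
  fixes x :: real assumes x: "0 < x" "x < 1"
  shows "(\<lambda>n. (1 - x^3) / ((1 - x^7) * (1 - x^5)) *
         ((1 - x^3*x^2*x^4*(x^6)^(2*n)) * (x^6)^n * Nf (x^3) (x^2) (x^4) (x^6) n / Df (x^3) (x^2) (x^4) (x^6) n))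
    sums ((1 - x^3) / ((1 - x^7) * (1 - x^5)) *
      (qpoch_inf (x^9) (x^6) * qpoch_inf (x^3) (x^6) * qpoch_inf (x^2) (x^6) * qpoch_inf (x^4) (x^6)
       / ((1 - x^3) * (1 - x^2) * (1 - x^4) *
          (qpoch_inf (x^6) (x^6) * qpoch_inf (x^12) (x^6) * qpoch_inf (x^13) (x^6) * qpoch_inf (x^11) (x^6)))))"
proof -
  have lt: "x^m \<noteq> 1" if "0 < m" for m
  proof -
    have "x^m < 1" using x that by (simp add: power_less_one_iff)
    then show ?thesis by simp
  qed
  have pos: "\<And>m n. 0 < m \<Longrightarrow> P x m n \<noteq> 0" using P_pos x by (metis less_irrefl)
  have Dnz: "\<And>n. Df (x^3) (x^2) (x^4) (x^6) n \<noteq> 0" unfolding Df_x using pos by simp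
  have tel: "(\<Sum>k<Suc n. (1 - x^3*x^2*x^4*(x^6)^(2*k)) * (x^6)^k * Nf (x^3) (x^2) (x^4) (x^6) k / Df (x^3) (x^2) (x^4) (x^6) k)
     = Nf (x^3) (x^2) (x^4) (x^6) (Suc n) / ((1-x^3)*(1-x^2)*(1-x^4) * Df (x^3) (x^2) (x^4) (x^6) n)" for n
    by (rule tele2[OF Dnz lt lt lt]) auto
  let ?K = "(1 - x^3) / ((1 - x^7) * (1 - x^5))"
  let ?E = "(1-x^3)*(1-x^2)*(1-x^4)"
  have lim: "(\<lambda>n. ?K * (Nf (x^3) (x^2) (x^4) (x^6) (Suc n) / (?E * Df (x^3) (x^2) (x^4) (x^6) n)))
     \<longlonglongrightarrow> ?K * (qpoch_inf (x^9) (x^6) * qpoch_inf (x^3) (x^6) * qpoch_inf (x^2) (x^6) * qpoch_inf (x^4) (x^6)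
       / (?E * (qpoch_inf (x^6) (x^6) * qpoch_inf (x^12) (x^6) * qpoch_inf (x^13) (x^6) * qpoch_inf (x^11) (x^6))))"
    unfolding Nf_x Df_x
    apply (intro tendsto_mult tendsto_const tendsto_divide PlimS[OF x] Plim[OF x])
    using lt Qnz[OF x] by simp
  have eq: "(\<Sum>k<Suc n. ?K * ((1 - x^3*x^2*x^4*(x^6)^(2*k)) * (x^6)^k * Nf (x^3) (x^2) (x^4) (x^6) k / Df (x^3) (x^2) (x^4) (x^6) k))
     = ?K * (Nf (x^3) (x^2) (x^4) (x^6) (Suc n) / (?E * Df (x^3) (x^2) (x^4) (x^6) n))" for n
    by (simp only: sum_distrib_left[symmetric] tel)
  show ?thesis unfolding sums_def
    apply (rule LIMSEQ_imp_Suc)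
    unfolding eq by (rule lim)
qed



lemma alg2:
  fixes a1 a2 a3 a4 a5 a6 a7 Q2 Q4 Q9 Q11 Q12 Q13 w :: real
  assumes "a1 \<noteq> 0" "a2 \<noteq> 0" "a3 \<noteq> 0" "a4 \<noteq> 0" "a5 \<noteq> 0" "a6 \<noteq> 0" "a7 \<noteq> 0"
    "Q2 \<noteq> 0" "Q4 \<noteq> 0" "Q9 \<noteq> 0" "Q11 \<noteq> 0" "Q12 \<noteq> 0" "Q13 \<noteq> 0" "w \<noteq> 0"
  shows "(a1/a6) * (Q4*Q2) * w / ((a2/a6)*(a4/a6)*(a3/a6) * ((a1*(a7*Q13)) * (a5*Q11)) * (a6*w*(a6*Q12)\<^sup>2/((a3*Q9)\<^sup>2)))
     = a3/(a7*a5) * (Q9*(a3*Q9)*Q2*Q4/(a3*a2*a4*((a6*Q12)*Q12*Q13*Q11)))"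
  using assms by (simp add: field_simps power2_eq_square)

lemma final_val:
  fixes x :: real assumes x: "0 < x" "x < 1"
  shows "qnum (x^6) (1/6) * (qpoch_inf ((x^3) powr (4/3)) (x^6) * qpoch_inf ((x^3) powr (2/3)) (x^6))
            * (x^3) powr (1/4)
          / (qnum (x^6) (1/3) * qnum (x^6) (2/3) * qnum (x^6) (1/2)
             * (qpoch_inf ((x^3) powr (1/3)) (x^6) * qpoch_inf ((x^3) powr (5/3)) (x^6)) * qpi (x^3))
   = (1 - x^3) / ((1 - x^7) * (1 - x^5)) *
      (qpoch_inf (x^9) (x^6) * qpoch_inf (x^3) (x^6) * qpoch_inf (x^2) (x^6) * qpoch_inf (x^4) (x^6)
       / ((1 - x^3) * (1 - x^2) * (1 - x^4) *
          (qpoch_inf (x^6) (x^6) * qpoch_inf (x^12) (x^6) * qpoch_inf (x^13) (x^6) * qpoch_inf (x^11) (x^6))))"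
proof -
  have lt: "1 - x^m \<noteq> 0" if "0 < m" for m
  proof -
    have "x^m < 1" using x that by (simp add: power_less_one_iff)
    then show ?thesis by simp
  qed
  have e: "(x^3)\<^sup>2 = x^6" by (simp add: power_mult[symmetric])
  have r1: "(x^3) powr (4/3) = x^4" by (rule pw) (use x in auto)
  have r2: "(x^3) powr (2/3) = x^2" by (rule pw) (use x in auto)
  have r3: "(x^3) powr (1/3) = x^1" by (rule pw) (use x in auto)
  have r4: "(x^3) powr (5/3) = x^5" by (rule pw) (use x in auto)
  have n1: "qnum (x^6) (1/6) = (1 - x^1) / (1 - x^6)" by (rule qnum_x) (use x in auto)
  have n2: "qnum (x^6) (1/3) = (1 - x^2) / (1 - x^6)" by (rule qnum_x) (use x in auto)
  have n3: "qnum (x^6) (2/3) = (1 - x^4) / (1 - x^6)" by (rule qnum_x) (use x in auto)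
  have n4: "qnum (x^6) (1/2) = (1 - x^3) / (1 - x^6)" by (rule qnum_x) (use x in auto)
  define w where "w = (x^3) powr (1/4)"
  have w: "w \<noteq> 0" using x by (simp add: w_def)
  have pi: "qpi (x^3) = (1 - x^6) * w * (qpoch_inf (x^6) (x^6))\<^sup>2 / (qpoch_inf (x^3) (x^6))\<^sup>2"
    unfolding qpi_def e w_def ..
  have S1: "qpoch_inf (x^1) (x^6) = (1 - x^1) * ((1 - x^7) * qpoch_inf (x^13) (x^6))"
    using Qs[OF x, of 1] Qs[OF x, of 7] by simp
  have S3: "qpoch_inf (x^3) (x^6) = (1 - x^3) * qpoch_inf (x^9) (x^6)"
    using Qs[OF x, of 3] by simp
  have S6: "qpoch_inf (x^6) (x^6) = (1 - x^6) * qpoch_inf (x^12) (x^6)"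
    using Qs[OF x, of 6] by simp
  have S5: "qpoch_inf (x^5) (x^6) = (1 - x^5) * qpoch_inf (x^11) (x^6)"
    using Qs[OF x, of 5] by simp
  have nz: "qpoch_inf (x^9) (x^6) \<noteq> 0" "qpoch_inf (x^12) (x^6) \<noteq> 0" "qpoch_inf (x^13) (x^6) \<noteq> 0"
     "qpoch_inf (x^11) (x^6) \<noteq> 0" "qpoch_inf (x^2) (x^6) \<noteq> 0" "qpoch_inf (x^4) (x^6) \<noteq> 0"
    using Qnz[OF x] by auto
  have l: "1 - x^1 \<noteq> 0" "1 - x^2 \<noteq> 0" "1 - x^3 \<noteq> 0" "1 - x^4 \<noteq> 0" "1 - x^5 \<noteq> 0"
    "1 - x^6 \<noteq> 0" "1 - x^7 \<noteq> 0" using lt[of 1] lt[of 2] lt[of 3] lt[of 4] lt[of 5] lt[of 6] lt[of 7] by simp_all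
  show ?thesis
    unfolding r1 r2 r3 r4 n1 n2 n3 n4 pi w_def[symmetric] S1 S3 S6 S5
    by (rule alg2) (use nz l w in auto)
qed


theorem mainTheorem12:
  fixes q :: real
  assumes "0 < q" and "q < 1"
  shows "(\<lambda>n. (1 - q ^ (4*n+3)) * (1 - q ^ (2*n+1)) * (qshift (q\<^sup>2) (1/2) n)\<^sup>2
              * qshift (q\<^sup>2) (1/3) n * qshift (q\<^sup>2) (2/3) n
            / ((1 - q\<^sup>2) * (1 - q ^ (2*n+2)) * (qfact (q\<^sup>2) n)\<^sup>2
              * qshift (q\<^sup>2) (7/6) (n+1) * qshift (q\<^sup>2) (5/6) (n+1)) * q ^ (2*n))
    sums (qnum (q\<^sup>2) (1/6) * (qpoch_inf (q powr (4/3)) (q\<^sup>2) * qpoch_inf (q powr (2/3)) (q\<^sup>2))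
            * q powr (1/4)
          / (qnum (q\<^sup>2) (1/3) * qnum (q\<^sup>2) (2/3) * qnum (q\<^sup>2) (1/2)
             * (qpoch_inf (q powr (1/3)) (q\<^sup>2) * qpoch_inf (q powr (5/3)) (q\<^sup>2)) * qpi q))"
proof -
  define x where "x = q powr (1/3)"
  have x0: "0 < x" using assms by (simp add: x_def)
  have q: "q = x^3"
  proof -
    have "x^3 = x powr (real 3)" using x0 by (simp add: powr_realpow)
    also have "\<dots> = q powr (1/3 * 3)" unfolding x_def by (simp add: powr_powr)
    also have "\<dots> = q" using assms by simp
    finally show ?thesis by simp
  qed
  have x1: "x < 1"
  proof (rule ccontr)
    assume "\<not> x < 1"
    then have "1 \<le> x^3" by (simp add: one_le_power)
    then show False using assms q by simp
  qed
  have e: "(x^3)\<^sup>2 = x^6" by (simp add: power_mult[symmetric])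
  have T: "(\<lambda>n. (1 - (x^3) ^ (4*n+3)) * (1 - (x^3) ^ (2*n+1)) * (qshift (x^6) (1/2) n)\<^sup>2
              * qshift (x^6) (1/3) n * qshift (x^6) (2/3) n
            / ((1 - x^6) * (1 - (x^3) ^ (2*n+2)) * (qfact (x^6) n)\<^sup>2
              * qshift (x^6) (7/6) (n+1) * qshift (x^6) (5/6) (n+1)) * (x^3) ^ (2*n))
       = (\<lambda>n. (1 - x^3) / ((1 - x^7) * (1 - x^5)) *
         ((1 - x^3*x^2*x^4*(x^6)^(2*n)) * (x^6)^n * Nf (x^3) (x^2) (x^4) (x^6) n / Df (x^3) (x^2) (x^4) (x^6) n))"
    by (rule ext) (rule term_eq[OF x0 x1])
  show ?thesis
    unfolding q e T final_val[OF x0 x1] by (rule sums_x[OF x0 x1])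
qed

end
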